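(* Let $T\in\mathbb R^{m\times n}$ be injective and satisfy the positive cone condition, and let $y\in\mathbb R^m$. Let $0<\mu<\lambda$ and suppose $N(\lambda)\subset N(\mu)$ and $\xi_\lambda^i=\xi_\mu^i$ for all $i\in I(\lambda)$. Then $$x_\mu^i\,\mathrm{sign}(x_\lambda^i)\le|x_\lambda^i|\qquad\text{for all }i\in I(\lambda).$$
   Context: For $\lambda>0$, $x_\lambda$ is the unique minimizer of $x\mapsto\frac{\lambda}{2}\|Tx-y\|_2^2+\|x\|_1$ on $\mathbb R^n$, and $\xi_\lambda:=\lambda T^{T}(y-Tx_\lambda)$, which satisfies $\xi_\lambda^i\in[-1,1]$ and $\xi_\lambda^i=\mathrm{sign}(x_\lambda^i)$ when $x_\lambda^i\ne0$. $N(\lambda)=\{i:x_\lambda^i=0\}$, $I(\lambda)=\{i:x_\lambda^i\ne0\}$. Positive cone condition: for every nonempty $J\subset\{1,\dots,n\}$, letting $T^J$ be the submatrix of $T$ consisting of the columns indexed by $J$ and $S_J=((T^J)^{T}T^J)^{-1}$, one has $(S_J)_{i,i}-\sum_{j\ne i}|(S_J)_{i,j}|\ge0$ for all $i\in J$ (equivalently, $(T^TT)^{-1}$ is diagonally dominant in this sense). *)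

theory Defs
  imports "HOL-Analysis.Analysis"
begin

definition lasso_obj :: "real^'n^'m \<Rightarrow> real^'m \<Rightarrow> real \<Rightarrow> real^'n \<Rightarrow> real" where
  "lasso_obj T y lam x = lam / 2 * (norm (T *v x - y))\<^sup>2 + (\<Sum>i\<in>UNIV. \<bar>x $ i\<bar>)"

definition lasso_min :: "real^'n^'m \<Rightarrow> real^'m \<Rightarrow> real \<Rightarrow> real^'n" where
  "lasso_min T y lam = (THE x. \<forall>z. lasso_obj T y lam x \<le> lasso_obj T y lam z)"

definition lasso_xi :: "real^'n^'m \<Rightarrow> real^'m \<Rightarrow> real \<Rightarrow> real^'n" where
  "lasso_xi T y lam = lam *\<^sub>R (transpose T *v (y - T *v lasso_min T y lam))"

text \<open>S is the inverse of the Gram matrix (T^J)^T T^J of the columns indexed by J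
  (entries of S indexed by J; entry (i,j) of (T^J)^T T^J is column i dot column j).\<close>
definition gram_inverse_on :: "real^'n^'m \<Rightarrow> 'n set \<Rightarrow> ('n \<Rightarrow> 'n \<Rightarrow> real) \<Rightarrow> bool" where
  "gram_inverse_on T J S \<longleftrightarrow>
     (\<forall>i\<in>J. \<forall>j\<in>J. (\<Sum>k\<in>J. (column i T \<bullet> column k T) * S k j) = (if i = j then 1 else 0))"

definition positive_cone_condition :: "real^'n^'m \<Rightarrow> bool" where
  "positive_cone_condition T \<longleftrightarrow>
     (\<forall>J. J \<noteq> {} \<longrightarrow> (\<forall>S. gram_inverse_on T J S \<longrightarrow>
        (\<forall>i\<in>J. S i i - (\<Sum>j\<in>J - {i}. \<bar>S i j\<bar>) \<ge> 0)))"

end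

theory Submission imports Defs begin

lemma col_dot_Tv:
  fixes T :: "real^'n^'m"
  shows "column i T \<bullet> (T *v v) = (\<Sum>k\<in>UNIV. v $ k * (column i T \<bullet> column k T))"
  unfolding matrix_mult_sum by (simp add: inner_sum_right scalar_mult_eq_scaleR)

lemma transpose_col:
  fixes T :: "real^'n^'m"
  shows "(transpose T *v w) $ i = column i T \<bullet> w"
  by (simp add: matrix_vector_mult_def transpose_def column_def inner_vec_def mult.commute)

lemma Tv_sq:
  fixes T :: "real^'n^'m"
  shows "(T *v v) \<bullet> (T *v v) = (\<Sum>k\<in>UNIV. v $ k * (column k T \<bullet> (T *v v)))"
proof -
  have "(T *v v) \<bullet> (T *v v) = (\<Sum>k\<in>UNIV. v $ k *s column k T) \<bullet> (T *v v)"
    by (simp add: matrix_mult_sum)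
  also have "\<dots> = (\<Sum>k\<in>UNIV. v $ k * (column k T \<bullet> (T *v v)))"
    by (simp add: inner_sum_left scalar_mult_eq_scaleR)
  finally show ?thesis .
qed

lemma supp_zero:
  fixes T :: "real^'n^'m"
  assumes inj: "inj (\<lambda>x. T *v x)"
    and out: "\<forall>k. k \<notin> I \<longrightarrow> v $ k = 0"
    and inn: "\<forall>i\<in>I. column i T \<bullet> (T *v v) = 0"
  shows "v = 0"
proof -
  have "(T *v v) \<bullet> (T *v v) = 0"
    unfolding Tv_sq by (rule sum.neutral) (use out inn in auto)
  hence "T *v v = T *v 0" by simp
  thus ?thesis using inj by (metis injD)
qed

lemma gram_exists:
  fixes T :: "real^'n^'m"
  assumes inj: "inj (\<lambda>x. T *v x)"
  shows "\<exists>S. gram_inverse_on T I S"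
proof -
  define G where "G i k = column i T \<bullet> column k T" for i k
  define F where "F v = (\<chi> i. if i \<in> I then (\<Sum>k\<in>I. v $ k * G i k) else v $ i)" for v :: "real^'n"
  have lin: "linear F"
    by (rule linearI) (auto simp: F_def vec_eq_iff sum.distrib sum_distrib_left algebra_simps)
  have "inj F"
  unfolding linear_injective_0[OF lin]
  proof (intro allI impI)
    fix v assume "F v = 0"
    define P where "P = (\<chi> k. if k \<in> I then v $ k else 0)"
    have out: "\<forall>k. k \<notin> I \<longrightarrow> v $ k = 0" using \<open>F v = 0\<close>
      by (auto simp: F_def vec_eq_iff split: if_splits)
    have "P = v" using out by (auto simp: P_def vec_eq_iff)
    have "\<forall>i\<in>I. column i T \<bullet> (T *v P) = 0"
    proof
      fix i assume "i \<in> I"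
      have "column i T \<bullet> (T *v P) = (\<Sum>k\<in>UNIV. P $ k * G i k)"
        by (simp add: col_dot_Tv G_def)
      also have "\<dots> = (\<Sum>k\<in>I. v $ k * G i k)"
        by (rule sum.mono_neutral_cong_right) (auto simp: P_def)
      also have "\<dots> = F v $ i" using \<open>i \<in> I\<close> by (simp add: F_def)
      finally show "column i T \<bullet> (T *v P) = 0" using \<open>F v = 0\<close> by simp
    qed
    hence "P = 0" by (intro supp_zero[OF inj]) (auto simp: P_def)
    thus "v = 0" using \<open>P = v\<close> by simp
  qed
  hence "surj F" using lin by (simp add: linear_injective_imp_surjective)
  hence ex: "\<forall>j. \<exists>v. F v = axis j 1" by (metis surjD)
  define S where "S k j = (SOME v. F v = axis j 1) $ k" for k j
  have "gram_inverse_on T I S"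
    unfolding gram_inverse_on_def
  proof (intro ballI)
    fix i j assume "i \<in> I" "j \<in> I"
    have "F (SOME v. F v = axis j 1) = axis j 1" using ex by (metis (mono_tags) someI)
    hence "F (SOME v. F v = axis j 1) $ i = axis j 1 $ i" by simp
    thus "(\<Sum>k\<in>I. column i T \<bullet> column k T * S k j) = (if i = j then 1 else 0)"
      using \<open>i \<in> I\<close> by (simp add: F_def S_def G_def axis_def mult.commute)
  qed
  thus ?thesis by blast
qed

lemma obj_ge_norm:
  fixes T :: "real^'n^'m"
  assumes "lam > 0"
  shows "norm x \<le> lasso_obj T y lam x"
proof -
  have "norm x \<le> (\<Sum>i\<in>UNIV. \<bar>x $ i\<bar>)" by (rule norm_le_l1_cart)
  also have "\<dots> \<le> lasso_obj T y lam x" using assms by (simp add: lasso_obj_def)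
  finally show ?thesis .
qed

lemma min_exists:
  fixes T :: "real^'n^'m"
  assumes "lam > 0"
  shows "\<exists>x. \<forall>z. lasso_obj T y lam x \<le> lasso_obj T y lam z"
proof -
  define R where "R = lasso_obj T y lam 0"
  have cont: "continuous_on (cball 0 R) (lasso_obj T y lam)"
    unfolding lasso_obj_def
    by (intro continuous_intros matrix_vector_mult_linear_continuous_on[THEN continuous_on_compose2]) auto
  have "R \<ge> 0" using obj_ge_norm[OF assms, of 0 T y] by (simp add: R_def)
  then obtain x where x: "x \<in> cball 0 R" "\<forall>z\<in>cball 0 R. lasso_obj T y lam x \<le> lasso_obj T y lam z"
    using continuous_attains_inf[OF compact_cball _ cont] by fastforce
  have "lasso_obj T y lam x \<le> lasso_obj T y lam z" for z
  proof (cases "z \<in> cball 0 R")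
    case True thus ?thesis using x by blast
  next
    case False
    hence "R < norm z" by simp
    also have "\<dots> \<le> lasso_obj T y lam z" by (rule obj_ge_norm[OF assms])
    finally have "R < lasso_obj T y lam z" .
    moreover have "lasso_obj T y lam x \<le> R" using x(2) \<open>R \<ge> 0\<close> by (auto simp: R_def)
    ultimately show ?thesis by linarith
  qed
  thus ?thesis by blast
qed

lemma parallelogram_half:
  fixes a b :: "real^'m"
  shows "(norm ((1/2) *\<^sub>R (a + b)))\<^sup>2 = ((norm a)\<^sup>2 + (norm b)\<^sup>2) / 2 - (norm (a - b))\<^sup>2 / 4"
  by (simp add: power2_norm_eq_inner inner_add_left inner_add_right inner_diff_left inner_diff_right inner_commute algebra_simps) (simp add: field_simps)

lemma aux_ineq:
  fixes p q r s :: real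
  assumes "p \<le> (q+r)/2 - s" "q \<le> p" "r \<le> p" shows "s \<le> 0"
  using assms by argo

lemma min_unique:
  fixes T :: "real^'n^'m"
  assumes "lam > 0" and inj: "inj (\<lambda>x. T *v x)"
    and h1: "\<forall>z. lasso_obj T y lam x1 \<le> lasso_obj T y lam z"
    and h2: "\<forall>z. lasso_obj T y lam x2 \<le> lasso_obj T y lam z"
  shows "x1 = x2"
proof -
  define a where "a = T *v x1 - y"
  define b where "b = T *v x2 - y"
  define m where "m = (1/2) *\<^sub>R (x1 + x2)"
  have Tm: "T *v m - y = (1/2) *\<^sub>R (a + b)"
  proof -
    have "(1/2) *\<^sub>R (a + b) = (1/2) *\<^sub>R (T *v x1 + T *v x2) - (1/2) *\<^sub>R (y + y)"
      by (simp add: a_def b_def scaleR_diff_right flip: scaleR_add_right)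
    also have "(1/2) *\<^sub>R (y + y) = y" by (simp flip: scaleR_2)
    finally show ?thesis by (simp add: m_def matrix_vector_mult_scaleR matrix_vector_right_distrib)
  qed
  have ab: "a - b = T *v (x1 - x2)" by (simp add: a_def b_def matrix_vector_mult_diff_distrib)
  have l1: "(\<Sum>i\<in>UNIV. \<bar>m $ i\<bar>) \<le> ((\<Sum>i\<in>UNIV. \<bar>x1 $ i\<bar>) + (\<Sum>i\<in>UNIV. \<bar>x2 $ i\<bar>)) / 2"
  proof -
    have "(\<Sum>i\<in>UNIV. \<bar>m $ i\<bar>) \<le> (\<Sum>i\<in>UNIV. (\<bar>x1 $ i\<bar> + \<bar>x2 $ i\<bar>) / 2)"
      by (rule sum_mono) (simp add: m_def abs_triangle_ineq[THEN order_trans] divide_right_mono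
           flip: add_divide_distrib)
    thus ?thesis by (simp add: sum.distrib flip: sum_divide_distrib)
  qed
  have "lasso_obj T y lam m \<le> (lasso_obj T y lam x1 + lasso_obj T y lam x2) / 2 - lam / 8 * (norm (a - b))\<^sup>2"
    using l1 unfolding lasso_obj_def Tm parallelogram_half a_def[symmetric] b_def[symmetric]
    by (simp add: algebra_simps add_divide_distrib)
  moreover have "lasso_obj T y lam x1 \<le> lasso_obj T y lam m" "lasso_obj T y lam x2 \<le> lasso_obj T y lam m"
    using h1 h2 by auto
  ultimately have "lam / 8 * (norm (a - b))\<^sup>2 \<le> 0" by (rule aux_ineq)
  hence "(norm (a - b))\<^sup>2 \<le> 0" using \<open>lam > 0\<close> by (simp add: mult_le_0_iff)
  hence "T *v (x1 - x2) = T *v 0" using ab by simp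
  hence "x1 - x2 = 0" using inj by (metis injD)
  thus ?thesis by simp
qed

lemma quad_zero:
  fixes A B d :: real
  assumes "d > 0" "B \<ge> 0" "\<forall>t. \<bar>t\<bar> < d \<longrightarrow> 0 \<le> A * t + B * t\<^sup>2"
  shows "A = 0"
proof (rule ccontr)
  assume "A \<noteq> 0"
  define e where "e = min (d/2) (\<bar>A\<bar> / (2*B+1))"
  have e0: "e > 0" using \<open>A \<noteq> 0\<close> assms by (simp add: e_def)
  have "e \<le> \<bar>A\<bar> / (2*B+1)" by (simp add: e_def)
  hence "e * (2*B+1) \<le> \<bar>A\<bar>" using assms by (simp add: field_simps)
  hence Be: "B * e < \<bar>A\<bar>" using e0 assms by (simp add: algebra_simps) 
  define t where "t = - sgn A * e"
  have "\<bar>t\<bar> = e" using e0 \<open>A \<noteq> 0\<close> by (simp add: t_def abs_mult)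
  moreover have "e < d" using assms by (simp add: e_def)
  ultimately have "\<bar>t\<bar> < d" by simp
  hence "0 \<le> A * t + B * t\<^sup>2" using assms by blast
  moreover have "A * t + B * t\<^sup>2 = e * (B * e - \<bar>A\<bar>)"
    using \<open>A \<noteq> 0\<close> by (cases "A > 0") (auto simp: t_def power2_eq_square algebra_simps)
  moreover have "e * (B * e - \<bar>A\<bar>) < 0" using e0 Be by (simp add: mult_pos_neg)
  ultimately show False by linarith
qed

lemma optimality:
  fixes T :: "real^'n^'m"
  assumes "lam > 0" and h: "\<forall>z. lasso_obj T y lam x \<le> lasso_obj T y lam z"
    and nz: "x $ i \<noteq> 0"
  shows "lam * (column i T \<bullet> (y - T *v x)) = sgn (x $ i)"
proof -
  define c where "c = column i T"
  define r where "r = T *v x - y"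
  define s where "s = sgn (x $ i)"
  define A where "A = lam * (r \<bullet> c) + s"
  define B where "B = lam / 2 * (norm c)\<^sup>2"
  have key: "lasso_obj T y lam (x + t *\<^sub>R axis i 1) = lasso_obj T y lam x + (A * t + B * t\<^sup>2)"
    if "\<bar>t\<bar> < \<bar>x $ i\<bar>" for t
  proof -
    have Tz: "T *v (x + t *\<^sub>R axis i 1) - y = r + t *\<^sub>R c"
      by (simp add: r_def c_def matrix_vector_right_distrib matrix_vector_mult_scaleR matrix_vector_mult_basis algebra_simps)
    have nsq: "(norm (r + t *\<^sub>R c))\<^sup>2 = (norm r)\<^sup>2 + 2 * t * (r \<bullet> c) + t\<^sup>2 * (norm c)\<^sup>2"
      by (simp add: power2_norm_eq_inner inner_add_left inner_add_right inner_commute algebra_simps) (simp add: power2_eq_square algebra_simps)?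
    have ai: "\<bar>x $ i + t\<bar> = \<bar>x $ i\<bar> + s * t"
      using that nz by (cases "x $ i > 0") (auto simp: s_def)
    have "(\<Sum>j\<in>UNIV. \<bar>(x + t *\<^sub>R axis i 1) $ j\<bar>) = (\<Sum>j\<in>UNIV. \<bar>x $ j\<bar> + (if j = i then s * t else 0))"
      by (rule sum.cong) (auto simp: axis_def ai)
    also have "\<dots> = (\<Sum>j\<in>UNIV. \<bar>x $ j\<bar>) + s * t"
      by (simp add: sum.distrib)
    finally have l1: "(\<Sum>j\<in>UNIV. \<bar>(x + t *\<^sub>R axis i 1) $ j\<bar>) = (\<Sum>j\<in>UNIV. \<bar>x $ j\<bar>) + s * t" .
    show ?thesis
      unfolding lasso_obj_def Tz l1 nsq r_def[symmetric]
      by (simp add: A_def B_def algebra_simps)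
  qed
  have "\<forall>t. \<bar>t\<bar> < \<bar>x $ i\<bar> \<longrightarrow> 0 \<le> A * t + B * t\<^sup>2"
    using key h by (metis le_add_same_cancel1)
  moreover have "B \<ge> 0" using \<open>lam > 0\<close> by (simp add: B_def)
  ultimately have "A = 0" using nz by (intro quad_zero[of "\<bar>x $ i\<bar>"]) auto
  hence "lam * (c \<bullet> (y - T *v x)) = s"
    by (simp add: A_def r_def inner_diff_right inner_diff_left inner_commute algebra_simps)
  thus ?thesis by (simp add: c_def s_def)
qed

lemma lasso_min_prop:
  fixes T :: "real^'n^'m"
  assumes "lam > 0" and inj: "inj (\<lambda>x. T *v x)"
  shows "\<forall>z. lasso_obj T y lam (lasso_min T y lam) \<le> lasso_obj T y lam z"
proof -
  have "\<exists>!x. \<forall>z. lasso_obj T y lam x \<le> lasso_obj T y lam z"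
    using min_exists[OF assms(1)] min_unique[OF assms] by blast
  thus ?thesis unfolding lasso_min_def by (rule theI')
qed

lemma xi_comp:
  fixes T :: "real^'n^'m"
  shows "lasso_xi T y l $ i = l * (column i T \<bullet> (y - T *v lasso_min T y l))"
  by (simp only: lasso_xi_def vector_scaleR_component transpose_col) simp

theorem mainTheorem15:
  fixes T :: "real^'n^'m" and y :: "real^'m" and lam mu :: real
  assumes "inj (\<lambda>x. T *v x)"
    and "positive_cone_condition T"
    and "0 < mu" and "mu < lam"
    and "\<forall>i. lasso_min T y lam $ i = 0 \<longrightarrow> lasso_min T y mu $ i = 0"
    and "\<forall>i. lasso_min T y lam $ i \<noteq> 0 \<longrightarrow> lasso_xi T y lam $ i = lasso_xi T y mu $ i"
  shows "\<forall>i. lasso_min T y lam $ i \<noteq> 0 \<longrightarrow>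
           lasso_min T y mu $ i * sgn (lasso_min T y lam $ i) \<le> \<bar>lasso_min T y lam $ i\<bar>"
proof (intro allI impI)
  fix i0 assume i0: "lasso_min T y lam $ i0 \<noteq> 0"
  note inj = assms(1)
  define xl where "xl = lasso_min T y lam"
  define xm where "xm = lasso_min T y mu"
  define I where "I = {i. xl $ i \<noteq> 0}"
  define s where "s i = sgn (xl $ i)" for i
  define c where "c = 1/mu - 1/lam"
  define G where "G i k = column i T \<bullet> column k T" for i k
  have lam0: "lam > 0" using assms by linarith
  have c0: "c > 0" using assms by (simp add: c_def field_simps)
  have minl: "\<forall>z. lasso_obj T y lam xl \<le> lasso_obj T y lam z"
    unfolding xl_def by (rule lasso_min_prop[OF lam0 inj])
  have optl: "lam * (column i T \<bullet> (y - T *v xl)) = s i" if "i \<in> I" for i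
    using optimality[OF lam0 minl] that by (simp add: I_def s_def)
  have optm: "mu * (column i T \<bullet> (y - T *v xm)) = s i" if "i \<in> I" for i
    using optl[OF that] assms(6) that xi_comp[of T y lam i] xi_comp[of T y mu i]
    by (simp add: I_def xl_def xm_def)
  define d where "d = xl - xm"
  have Gd: "column i T \<bullet> (T *v d) = c * s i" if "i \<in> I" for i
  proof -
    have "column i T \<bullet> (T *v d) = column i T \<bullet> (y - T *v xm) - column i T \<bullet> (y - T *v xl)"
      by (simp add: d_def matrix_vector_mult_diff_distrib inner_diff_right)
    also have "\<dots> = s i / mu - s i / lam"
      using optl[OF that] optm[OF that] lam0 assms(3) by (simp add: field_simps)
    finally show ?thesis by (simp add: c_def algebra_simps)
  qed
  obtain S where S: "gram_inverse_on T I S" using gram_exists[OF inj] by blast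
  define w where "w = (\<chi> k. if k \<in> I then c * (\<Sum>j\<in>I. S k j * s j) else 0)"
  have Gw: "column i T \<bullet> (T *v w) = c * s i" if "i \<in> I" for i
  proof -
    have "column i T \<bullet> (T *v w) = (\<Sum>k\<in>UNIV. w $ k * G i k)"
      by (simp add: col_dot_Tv G_def)
    also have "\<dots> = (\<Sum>k\<in>I. (c * (\<Sum>j\<in>I. S k j * s j)) * G i k)"
      by (rule sum.mono_neutral_cong_right) (auto simp: w_def)
    also have "\<dots> = c * (\<Sum>k\<in>I. \<Sum>j\<in>I. S k j * s j * G i k)"
      by (simp add: sum_distrib_left sum_distrib_right mult.assoc)
    also have "\<dots> = c * (\<Sum>j\<in>I. \<Sum>k\<in>I. S k j * s j * G i k)"
      by (subst sum.swap) (rule refl)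
    also have "\<dots> = c * (\<Sum>j\<in>I. s j * (\<Sum>k\<in>I. G i k * S k j))"
      by (simp add: sum_distrib_left mult_ac)
    also have "\<dots> = c * (\<Sum>j\<in>I. s j * (if i = j then 1 else 0))"
      using S that unfolding gram_inverse_on_def G_def by (intro arg_cong[where f="(*) c"] sum.cong) auto
    also have "\<dots> = c * s i" using that by (simp add: if_distrib sum.delta cong: if_cong)
    finally show ?thesis .
  qed
  have "d - w = 0"
  proof (rule supp_zero[OF inj, of I])
    show "\<forall>k. k \<notin> I \<longrightarrow> (d - w) $ k = 0"
      using assms(5) by (auto simp: I_def d_def w_def xl_def xm_def)
    show "\<forall>i\<in>I. column i T \<bullet> (T *v (d - w)) = 0"
      using Gd Gw by (simp add: matrix_vector_mult_diff_distrib inner_diff_right)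
  qed
  hence dw: "d $ i0 = c * (\<Sum>j\<in>I. S i0 j * s j)"
    using i0 by (simp add: w_def I_def xl_def)
  have iI: "i0 \<in> I" using i0 by (simp add: I_def xl_def)
  have fin: "finite I" by simp
  have "s i0 * d $ i0 = c * (\<Sum>j\<in>I. S i0 j * (s i0 * s j))"
    by (simp add: dw sum_distrib_left mult_ac)
  also have "(\<Sum>j\<in>I. S i0 j * (s i0 * s j)) = S i0 i0 + (\<Sum>j\<in>I - {i0}. S i0 j * (s i0 * s j))"
  proof -
    have "s i0 * s i0 = 1" using i0 by (simp add: s_def xl_def sgn_mult_self_eq flip: sgn_mult)
    thus ?thesis using sum.remove[OF fin iI, of "\<lambda>j. S i0 j * (s i0 * s j)"] by simp
  qed
  also have "S i0 i0 + (\<Sum>j\<in>I - {i0}. S i0 j * (s i0 * s j)) \<ge> S i0 i0 - (\<Sum>j\<in>I - {i0}. \<bar>S i0 j\<bar>)"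
  proof -
    have "(\<Sum>j\<in>I - {i0}. - \<bar>S i0 j\<bar>) \<le> (\<Sum>j\<in>I - {i0}. S i0 j * (s i0 * s j))"
    proof (rule sum_mono)
      fix j
      have "\<bar>S i0 j * (s i0 * s j)\<bar> \<le> \<bar>S i0 j\<bar>"
        by (simp add: abs_mult s_def abs_sgn_eq mult_left_le)
      thus "- \<bar>S i0 j\<bar> \<le> S i0 j * (s i0 * s j)" by linarith
    qed
    thus ?thesis by (simp add: sum_negf)
  qed
  moreover have "S i0 i0 - (\<Sum>j\<in>I - {i0}. \<bar>S i0 j\<bar>) \<ge> 0"
    using assms(2) S iI unfolding positive_cone_condition_def by blast
  ultimately have "s i0 * d $ i0 \<ge> 0" using c0 by (simp add: mult_mono)
  hence "xm $ i0 * s i0 \<le> xl $ i0 * s i0" by (simp add: d_def algebra_simps)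
  also have "xl $ i0 * s i0 = \<bar>xl $ i0\<bar>" by (simp add: s_def) (metis abs_sgn)
  finally show "lasso_min T y mu $ i0 * sgn (lasso_min T y lam $ i0) \<le> \<bar>lasso_min T y lam $ i0\<bar>"
    by (simp add: xl_def xm_def s_def)
qed

end
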